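(* Let $0<s<r<r_{max}(M)$, $\lambda>0$, and let $h_r$, $h_s$ be the solutions of $h''(h')^{n-1}=e^{\lambda h}\mathcal D_M(u)$ on $[0,r)$ resp. $[0,s)$ with $h_r\to\infty$ as $u\to r$ and $h_s\to\infty$ as $u\to s$. Then $h_r(u)\le h_s(u)$ for all $u\in[0,s)$.
   Context: For a real-analytic Riemannian manifold $M$ of real dimension $n\ge2$, $u=\sqrt\rho$ with $\rho(x,v)=4|v|^2$ on the Grauert tube $T^rM$. $\mathcal D_M$ is: $u^{n-1}$ for $\mathbb R^n$; $(\sin u)^{n-1}$ for $H^n$ ($r_{max}=\pi$); $(\sinh u)^{n-1}$ for the round sphere and real projective space; $2^{n-1}(\cosh\frac u2)^k(\sinh\frac u2)^{n-1}$, $k=1,3,7$, for complex projective space, quaternionic projective space, Cayley plane ($r_{max}=\infty$ except for $H^n$). Solutions are taken real-analytic in $u^2$ (so $h'(0)=0$), with $h'>0$ on $(0,r)$. *)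

theory Defs
  imports "HOL-Analysis.Analysis"
begin

datatype model = Euclid | Hyperbolic | RoundSphere | RealProj
               | ComplexProj | QuatProj | CayleyPlane

fun valid_dim :: "model \<Rightarrow> nat \<Rightarrow> bool" where
  "valid_dim ComplexProj n = (n \<ge> 2 \<and> even n)"
| "valid_dim QuatProj n = (n \<ge> 4 \<and> 4 dvd n)"
| "valid_dim CayleyPlane n = (n = 16)"
| "valid_dim _ n = (n \<ge> 2)"

fun DM :: "model \<Rightarrow> nat \<Rightarrow> real \<Rightarrow> real" where
  "DM Euclid n u = u ^ (n - 1)"
| "DM Hyperbolic n u = (sin u) ^ (n - 1)"
| "DM RoundSphere n u = (sinh u) ^ (n - 1)"
| "DM RealProj n u = (sinh u) ^ (n - 1)"
| "DM ComplexProj n u = 2 ^ (n - 1) * (cosh (u/2)) ^ 1 * (sinh (u/2)) ^ (n - 1)"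
| "DM QuatProj n u = 2 ^ (n - 1) * (cosh (u/2)) ^ 3 * (sinh (u/2)) ^ (n - 1)"
| "DM CayleyPlane n u = 2 ^ (n - 1) * (cosh (u/2)) ^ 7 * (sinh (u/2)) ^ (n - 1)"

text \<open>r < r_max(M): r_max = pi for hyperbolic space, infinity otherwise.\<close>
definition below_rmax :: "model \<Rightarrow> real \<Rightarrow> bool" where
  "below_rmax M r = (M = Hyperbolic \<longrightarrow> r < pi)"

definition real_analytic_on :: "(real \<Rightarrow> real) \<Rightarrow> real set \<Rightarrow> bool" where
  "real_analytic_on g S = (\<forall>x\<in>S. \<exists>d>0. \<exists>c::nat \<Rightarrow> real.
      \<forall>y. \<bar>y - x\<bar> < d \<longrightarrow> (\<lambda>k. c k * (y - x) ^ k) sums g y)"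

definition analytic_in_usq :: "real \<Rightarrow> (real \<Rightarrow> real) \<Rightarrow> bool" where
  "analytic_in_usq r h = (\<exists>g. real_analytic_on g {0..<r\<^sup>2} \<and> (\<forall>u\<in>{0..<r}. h u = g (u\<^sup>2)))"

definition blowup_solution ::
  "model \<Rightarrow> nat \<Rightarrow> real \<Rightarrow> real \<Rightarrow> (real \<Rightarrow> real) \<Rightarrow> bool" where
  "blowup_solution M n lam r h =
     (analytic_in_usq r h \<and>
      (\<exists>h1 h2. (\<forall>u\<in>{0..<r}.
                  (h has_real_derivative h1 u) (at u within {0..<r}) \<and>
                  (h1 has_real_derivative h2 u) (at u within {0..<r}) \<and>
                  h2 u * (h1 u) ^ (n - 1) = exp (lam * h u) * DM M n u) \<and>
               h1 0 = 0 \<and> (\<forall>u\<in>{0<..<r}. h1 u > 0)) \<and>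
      filterlim h at_top (at_left r))"

end

theory Submission
  imports Defs
begin

lemma DM_pos:
  assumes "below_rmax M r" "0 < u" "u < r"
  shows "DM M n u > 0"
proof (cases M)
  case Hyperbolic
  then have "u < pi" using assms unfolding below_rmax_def by auto
  then have "sin u > 0" using assms sin_gt_zero by auto
  then show ?thesis using Hyperbolic by simp
qed (use assms in auto)

theorem lemma2p3:
  fixes M :: model and n :: nat and lam r s :: real and hr hs :: "real \<Rightarrow> real"
  assumes "valid_dim M n"
    and "0 < s" and "s < r" and "below_rmax M r"
    and "lam > 0"
    and "blowup_solution M n lam r hr"
    and "blowup_solution M n lam s hs"
  shows "\<forall>u\<in>{0..<s}. hr u \<le> hs u"
proof (rule ccontr)
  assume "\<not> ?thesis"
  then obtain u0 where u0: "u0 \<in> {0..<s}" "hr u0 > hs u0" by (auto simp: not_le)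
  have n1: "n \<ge> 1" using assms(1) by (cases M) auto
  obtain a1 a2 where A: "\<And>u. u\<in>{0..<r} \<Longrightarrow> (hr has_real_derivative a1 u) (at u within {0..<r}) \<and>
                  (a1 has_real_derivative a2 u) (at u within {0..<r}) \<and>
                  a2 u * (a1 u) ^ (n - 1) = exp (lam * hr u) * DM M n u"
     and A0: "a1 0 = 0" and Ap: "\<And>u. u\<in>{0<..<r} \<Longrightarrow> a1 u > 0"
    using assms(6) unfolding blowup_solution_def by blast
  obtain b1 b2 where B: "\<And>u. u\<in>{0..<s} \<Longrightarrow> (hs has_real_derivative b1 u) (at u within {0..<s}) \<and>
                  (b1 has_real_derivative b2 u) (at u within {0..<s}) \<and>
                  b2 u * (b1 u) ^ (n - 1) = exp (lam * hs u) * DM M n u"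
     and B0: "b1 0 = 0" and Bp: "\<And>u. u\<in>{0<..<s} \<Longrightarrow> b1 u > 0"
     and Blim: "filterlim hs at_top (at_left s)"
    using assms(7) unfolding blowup_solution_def by blast
  have sub: "{0..<s} \<subseteq> {0..<r}" using assms(3) by auto
  have A': "\<And>u. u\<in>{0..<s} \<Longrightarrow> (hr has_real_derivative a1 u) (at u within {0..<s}) \<and>
                  (a1 has_real_derivative a2 u) (at u within {0..<s})"
    using A sub by (meson DERIV_subset subsetD)
  define d where "d = (\<lambda>u. hr u - hs u)"
  have dder: "\<And>u. u\<in>{0..<s} \<Longrightarrow> (d has_real_derivative (a1 u - b1 u)) (at u within {0..<s})"
    unfolding d_def using A' B by (auto intro!: derivative_eq_intros)
  have dcont: "continuous_on {0..<s} d" using dder by (rule DERIV_continuous_on)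
  have hrcont: "continuous_on {0..s} hr"
  proof -
    have "continuous_on {0..<r} hr" using A by (intro DERIV_continuous_on) blast
    then show ?thesis by (rule continuous_on_subset) (use assms(3) in auto)
  qed
  obtain Bd where Bd: "\<And>u. u \<in> {0..s} \<Longrightarrow> hr u \<le> Bd"
    using compact_attains_sup[OF compact_continuous_image[OF hrcont compact_Icc]] assms(2)
    by fastforce
  have "eventually (\<lambda>t. Bd - d u0 < hs t) (at_left s)"
    using Blim unfolding filterlim_at_top_dense by blast
  then obtain b where b: "b < s" "\<And>t. b < t \<Longrightarrow> t < s \<Longrightarrow> Bd - d u0 < hs t"
    unfolding eventually_at_left_field by blast
  define s' where "s' = max b u0"
  have s': "u0 \<le> s'" "s' < s" "0 \<le> s'" using b u0 by (auto simp: s'_def)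
  have tail: "\<And>t. s' < t \<Longrightarrow> t < s \<Longrightarrow> d t < d u0"
  proof -
    fix t assume "s' < t" "t < s"
    then have "hr t \<le> Bd" "Bd - d u0 < hs t" using Bd b s' by (auto simp: s'_def)
    then show "d t < d u0" unfolding d_def by simp
  qed
  have "continuous_on {0..s'} d" using dcont by (rule continuous_on_subset) (use s' in auto)
  then obtain m where m: "m \<in> {0..s'}" "\<And>t. t \<in> {0..s'} \<Longrightarrow> d t \<le> d m"
    using continuous_attains_sup[of "{0..s'}" d] s' by fastforce
  have dm0: "d m \<ge> d u0" using m u0 s' by auto
  have mmax: "\<And>t. t \<in> {0..<s} \<Longrightarrow> d t \<le> d m"
  proof -
    fix t assume t: "t \<in> {0..<s}"
    show "d t \<le> d m"
    proof (cases "t \<le> s'")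
      case True then show ?thesis using m t by auto
    next
      case False then show ?thesis using tail[of t] t dm0 by auto
    qed
  qed
  have dmpos: "d m > 0" using dm0 u0 unfolding d_def by auto
  have ms: "0 \<le> m" "m < s" using m s' by auto
  have eq1: "a1 m = b1 m"
  proof (cases "m = 0")
    case True then show ?thesis using A0 B0 by simp
  next
    case False
    then have "m \<in> interior {0..<s}" using ms by auto
    then have "(d has_real_derivative (a1 m - b1 m)) (at m)"
      using dder[of m] ms at_within_interior by fastforce
    moreover have "\<forall>y. \<bar>m - y\<bar> < min m (s - m) \<longrightarrow> d y \<le> d m"
    proof (intro allI impI)
      fix y assume "\<bar>m - y\<bar> < min m (s - m)"
      then have "y \<in> {0..<s}" by (auto simp: abs_if split: if_splits)
      then show "d y \<le> d m" by (rule mmax)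
    qed
    moreover have "0 < min m (s - m)" using False ms by auto
    ultimately have "a1 m - b1 m = 0"
      using DERIV_local_max by blast
    then show ?thesis by simp
  qed
  have "continuous (at m within {0..<s}) d" using dcont ms unfolding continuous_on_eq_continuous_within by auto
  then have "eventually (\<lambda>t. d t > 0) (at m within {0..<s})"
    using dmpos order_tendstoD(1) unfolding continuous_within by blast
  then obtain e where e: "e > 0" "\<And>t. t \<in> {0..<s} \<Longrightarrow> dist t m < e \<Longrightarrow> d t > 0"
  proof -
    from \<open>eventually (\<lambda>t. d t > 0) (at m within {0..<s})\<close>
    obtain e where "e > 0" "\<And>t. t \<in> {0..<s} \<Longrightarrow> t \<noteq> m \<Longrightarrow> dist t m < e \<Longrightarrow> d t > 0"
      unfolding eventually_at by blast
    then show ?thesis using that dmpos by (metis)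
  qed
  define t1 where "t1 = min (m + e/2) ((m + s)/2)"
  have t1: "m < t1" "t1 < s" using e ms unfolding t1_def min_def by auto
  have dpos: "\<And>t. m \<le> t \<Longrightarrow> t \<le> t1 \<Longrightarrow> d t > 0"
    using e t1 ms by (auto simp: t1_def dist_real_def)
  define F where "F = (\<lambda>u. a1 u ^ n - b1 u ^ n)"
  have Fder: "\<And>u. u\<in>{0..<s} \<Longrightarrow> (F has_real_derivative
       (real n * (exp (lam * hr u) - exp (lam * hs u)) * DM M n u)) (at u within {0..<s})"
  proof -
    fix u assume u: "u \<in> {0..<s}"
    have e1: "a2 u * (a1 u) ^ (n - 1) = exp (lam * hr u) * DM M n u" using A u sub by blast
    have e2: "b2 u * (b1 u) ^ (n - 1) = exp (lam * hs u) * DM M n u" using B u by blast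
    have "(F has_real_derivative (real n * a1 u ^ (n - 1) * a2 u - real n * b1 u ^ (n - 1) * b2 u))
           (at u within {0..<s})"
    proof -
      have d1: "((\<lambda>u. a1 u ^ n) has_real_derivative (real n * a1 u ^ (n - 1) * a2 u)) (at u within {0..<s})"
      proof -
        have "(a1 has_real_derivative a2 u) (at u within {0..<s})" using A' u by blast
        then show ?thesis by (auto intro!: derivative_eq_intros)
      qed
      have d2: "((\<lambda>u. b1 u ^ n) has_real_derivative (real n * b1 u ^ (n - 1) * b2 u)) (at u within {0..<s})"
      proof -
        have "(b1 has_real_derivative b2 u) (at u within {0..<s})" using B u by blast
        then show ?thesis by (auto intro!: derivative_eq_intros)
      qed
      show ?thesis unfolding F_def by (rule DERIV_diff[OF d1 d2])
    qed
    moreover have "real n * a1 u ^ (n - 1) * a2 u - real n * b1 u ^ (n - 1) * b2 u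
        = real n * (exp (lam * hr u) - exp (lam * hs u)) * DM M n u"
      using e1 e2 by (simp add: algebra_simps)
    ultimately show "(F has_real_derivative
       (real n * (exp (lam * hr u) - exp (lam * hs u)) * DM M n u)) (at u within {0..<s})" by simp
  qed
  have Fcont: "continuous_on {0..<s} F" using Fder by (rule DERIV_continuous_on)
  have Fm: "F m = 0" unfolding F_def using eq1 by simp
  have Fpos: "\<And>t. m < t \<Longrightarrow> t \<le> t1 \<Longrightarrow> F t > 0"
  proof -
    fix t assume t: "m < t" "t \<le> t1"
    have "F m < F t"
    proof (rule DERIV_pos_imp_increasing_open[OF t(1)])
      fix x assume x: "m < x" "x < t"
      then have xi: "x \<in> interior {0..<s}" using ms t t1 by auto
      have "(F has_real_derivative (real n * (exp (lam * hr x) - exp (lam * hs x)) * DM M n x)) (at x)"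
        using Fder[of x] xi at_within_interior[OF xi] interior_subset by fastforce
      moreover have "real n * (exp (lam * hr x) - exp (lam * hs x)) * DM M n x > 0"
      proof -
        have "d x > 0" using dpos[of x] x t by auto
        then have "exp (lam * hr x) > exp (lam * hs x)" using assms(5) unfolding d_def by simp
        moreover have "DM M n x > 0" using DM_pos[OF assms(4)] x ms t t1 assms(3) by auto
        ultimately show ?thesis using n1 by simp
      qed
      ultimately show "\<exists>y. DERIV F x :> y \<and> y > 0" by blast
    next
      show "continuous_on {m..t} F" using Fcont by (rule continuous_on_subset) (use ms t t1 in auto)
    qed
    then show "F t > 0" using Fm by simp
  qed
  have "d m < d t1"
  proof (rule DERIV_pos_imp_increasing_open[OF t1(1)])
    fix x assume x: "m < x" "x < t1"
    then have xi: "x \<in> interior {0..<s}" using ms t1 by auto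
    have "(d has_real_derivative (a1 x - b1 x)) (at x)"
      using dder[of x] xi at_within_interior[OF xi] interior_subset by fastforce
    moreover have "a1 x - b1 x > 0"
    proof -
      have "F x > 0" using Fpos x by auto
      then have "b1 x ^ n < a1 x ^ n" unfolding F_def by simp
      moreover have "a1 x \<ge> 0" using Ap[of x] x ms t1 assms(3) by auto
      ultimately show ?thesis using power_less_imp_less_base by fastforce
    qed
    ultimately show "\<exists>y. DERIV d x :> y \<and> y > 0" by blast
  next
    show "continuous_on {m..t1} d" using dcont by (rule continuous_on_subset) (use ms t1 in auto)
  qed
  moreover have "d t1 \<le> d m" using mmax t1 ms by auto
  ultimately show False by simp
qed

end
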